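(* A family of structures $\mathfrak{K}$ is $\mathbf{PL}$-learnable if and only if $\mathfrak{K}$ is a $\Sigma^{\mathrm{inf}}_2$-antichain, i.e., for any two distinct $\mathcal{A},\mathcal{B}\in\mathfrak{K}$ there are $\Sigma^{\mathrm{inf}}_2$ sentences $\varphi,\psi$ with $\mathcal{A}\models\varphi$, $\mathcal{B}\not\models\varphi$, $\mathcal{B}\models\psi$, $\mathcal{A}\not\models\psi$.
   Context: All structures are countable, have domain $\mathbb{N}$, are in a finite relational signature, and are identified with their atomic diagrams. A family of structures $\mathfrak{K}$ is a countable set of pairwise nonisomorphic such structures. $\mathcal{S}\restriction_s$ is the finite substructure of $\mathcal{S}$ on $\{0,\dots,s\}$. $\mathrm{LD}(\mathfrak{K})$ is the set of structures with domain $\mathbb{N}$ isomorphic to a member of $\mathfrak{K}$. The hypothesis space is $\{\ulcorner\mathcal{A}\urcorner:\mathcal{A}\in\mathfrak{K}\}\cup\{?\}$; a learner is an arbitrary function $\mathbf{M}$ from $\{\mathcal{S}\restriction_s:\mathcal{S}\in\mathrm{LD}(\mathfrak{K})\}$ to the hypothesis space. $\mathfrak{K}$ is $\mathbf{PL}$-learnable (partially learnable) if there is a learner $\mathbf{M}$ such that for every $\mathcal{S}\in\mathrm{LD}(\mathfrak{K})$ and every $\mathcal{A}\in\mathfrak{K}$: the set $\{n:\mathbf{M}(\mathcal{S}\restriction_n)=\ulcorner\mathcal{A}\urcorner\}$ is infinite iff $\mathcal{A}\cong\mathcal{S}$ (the symbol $?$ may be output infinitely often). Infinitary logic $\mathcal{L}_{\omega_1\omega}$: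 $\Sigma^{\mathrm{inf}}_0=\Pi^{\mathrm{inf}}_0$ formulas are finitary quantifier-free; a $\Sigma^{\mathrm{inf}}_\alpha$ formula is a countable disjunction $\bigvee_i\exists\bar y_i\,\psi_i$ with $\psi_i\in\Pi^{\mathrm{inf}}_{\beta_i}$, $\beta_i<\alpha$; a $\Pi^{\mathrm{inf}}_\alpha$ formula is a countable conjunction $\bigwedge_i\forall\bar y_i\,\psi_i$ with $\psi_i\in\Sigma^{\mathrm{inf}}_{\beta_i}$, $\beta_i<\alpha$ (free variables among a fixed finite tuple). *)

theory Defs
  imports Main "HOL-Library.Countable_Set"
begin

text \<open>A finite relational signature is a list of arities: relation symbol r (r < length sig)
  has arity sig ! r. A structure with domain nat is identified with its atomic diagram,
  i.e. a predicate on (relation symbol, tuple), which is false outside the signature.\<close>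

type_synonym str = "nat \<Rightarrow> nat list \<Rightarrow> bool"

definition wf_str :: "nat list \<Rightarrow> str \<Rightarrow> bool" where
  "wf_str sig S \<longleftrightarrow> (\<forall>r xs. S r xs \<longrightarrow> r < length sig \<and> length xs = sig ! r)"

definition iso :: "str \<Rightarrow> str \<Rightarrow> bool" where
  "iso A B \<longleftrightarrow> (\<exists>f. bij f \<and> (\<forall>r xs. A r xs \<longleftrightarrow> B r (map f xs)))"

definition family :: "nat list \<Rightarrow> str set \<Rightarrow> bool" where
  "family sig K \<longleftrightarrow> countable K \<and> (\<forall>A\<in>K. wf_str sig A)
     \<and> (\<forall>A\<in>K. \<forall>B\<in>K. A \<noteq> B \<longrightarrow> \<not> iso A B)"

definition LD :: "nat list \<Rightarrow> str set \<Rightarrow> str set" where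
  "LD sig K = {S. wf_str sig S \<and> (\<exists>A\<in>K. iso A S)}"

definition restr :: "str \<Rightarrow> nat \<Rightarrow> nat \<times> str" where
  "restr S s = (s, \<lambda>r xs. S r xs \<and> set xs \<subseteq> {0..s})"

text \<open>Learners: hypotheses are codes of members of K (Some A) or ? (None).\<close>
definition PL_learnable :: "nat list \<Rightarrow> str set \<Rightarrow> bool" where
  "PL_learnable sig K \<longleftrightarrow>
    (\<exists>M :: nat \<times> str \<Rightarrow> str option.
       (\<forall>S\<in>LD sig K. \<forall>n. M (restr S n) \<in> insert None (Some ` K)) \<and>
       (\<forall>S\<in>LD sig K. \<forall>A\<in>K. infinite {n. M (restr S n) = Some A} \<longleftrightarrow> iso A S))"

datatype qf = QAtom nat "nat list" | QEq nat nat | QNeg qf | QAnd qf qf | QOr qf qf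

text \<open>BigOr I ys psi is the countable disjunction over i in I of (exists ys i. psi i);
  BigAnd I ys psi is the countable conjunction over i in I of (forall ys i. psi i).\<close>
datatype form = QF qf
  | BigOr "nat set" "nat \<Rightarrow> nat list" "nat \<Rightarrow> form"
  | BigAnd "nat set" "nat \<Rightarrow> nat list" "nat \<Rightarrow> form"

fun sat_qf :: "str \<Rightarrow> (nat \<Rightarrow> nat) \<Rightarrow> qf \<Rightarrow> bool" where
  "sat_qf S v (QAtom r xs) = S r (map v xs)"
| "sat_qf S v (QEq a b) = (v a = v b)"
| "sat_qf S v (QNeg p) = (\<not> sat_qf S v p)"
| "sat_qf S v (QAnd p q) = (sat_qf S v p \<and> sat_qf S v q)"
| "sat_qf S v (QOr p q) = (sat_qf S v p \<or> sat_qf S v q)"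

primrec sat :: "str \<Rightarrow> (nat \<Rightarrow> nat) \<Rightarrow> form \<Rightarrow> bool" where
  "sat S v (QF q) = sat_qf S v q"
| "sat S v (BigOr I ys \<psi>) =
     (\<exists>i\<in>I. \<exists>w. (\<forall>x. x \<notin> set (ys i) \<longrightarrow> w x = v x) \<and> sat S w (\<psi> i))"
| "sat S v (BigAnd I ys \<psi>) =
     (\<forall>i\<in>I. \<forall>w. (\<forall>x. x \<notin> set (ys i) \<longrightarrow> w x = v x) \<longrightarrow> sat S w (\<psi> i))"

fun fv_qf :: "qf \<Rightarrow> nat set" where
  "fv_qf (QAtom r xs) = set xs"
| "fv_qf (QEq a b) = {a, b}"
| "fv_qf (QNeg p) = fv_qf p"
| "fv_qf (QAnd p q) = fv_qf p \<union> fv_qf q"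
| "fv_qf (QOr p q) = fv_qf p \<union> fv_qf q"

primrec fv :: "form \<Rightarrow> nat set" where
  "fv (QF q) = fv_qf q"
| "fv (BigOr I ys \<psi>) = (\<Union>i\<in>I. fv (\<psi> i) - set (ys i))"
| "fv (BigAnd I ys \<psi>) = (\<Union>i\<in>I. fv (\<psi> i) - set (ys i))"

definition sentence :: "form \<Rightarrow> bool" where
  "sentence \<phi> \<longleftrightarrow> fv \<phi> = {}"

definition models :: "str \<Rightarrow> form \<Rightarrow> bool" where
  "models S \<phi> \<longleftrightarrow> sat S (\<lambda>_. 0) \<phi>"

inductive SigmaInf :: "nat \<Rightarrow> form \<Rightarrow> bool" and PiInf :: "nat \<Rightarrow> form \<Rightarrow> bool" where
  sig0: "SigmaInf 0 (QF q)"
| pi0: "PiInf 0 (QF q)"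
| sigS: "0 < \<alpha> \<Longrightarrow> (\<forall>i\<in>I. \<exists>\<beta><\<alpha>. PiInf \<beta> (\<psi> i)) \<Longrightarrow> SigmaInf \<alpha> (BigOr I ys \<psi>)"
| piS: "0 < \<alpha> \<Longrightarrow> (\<forall>i\<in>I. \<exists>\<beta><\<alpha>. SigmaInf \<beta> (\<psi> i)) \<Longrightarrow> PiInf \<alpha> (BigAnd I ys \<psi>)"

definition Sigma2_antichain :: "str set \<Rightarrow> bool" where
  "Sigma2_antichain K \<longleftrightarrow> (\<forall>A\<in>K. \<forall>B\<in>K. A \<noteq> B \<longrightarrow>
     (\<exists>\<phi> \<psi>. sentence \<phi> \<and> SigmaInf 2 \<phi> \<and> sentence \<psi> \<and> SigmaInf 2 \<psi> \<and>
        models A \<phi> \<and> \<not> models B \<phi> \<and> models B \<psi> \<and> \<not> models A \<psi>))"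

end

theory Submission
  imports Defs
begin


instance qf :: countable by countable_datatype

lemma iso_sym: "iso A B \<Longrightarrow> iso B A"
  unfolding iso_def
proof (elim exE conjE)
  fix f assume b: "bij f" and h: "\<forall>r xs. A r xs \<longleftrightarrow> B r (map f xs)"
  have "\<forall>r xs. B r xs \<longleftrightarrow> A r (map (inv f) xs)"
  proof (intro allI)
    fix r xs
    have "map f (map (inv f) xs) = xs" using b by (simp add: bij_is_surj surj_f_inv_f map_idI)
    then show "B r xs \<longleftrightarrow> A r (map (inv f) xs)" using h by metis
  qed
  moreover have "bij (inv f)" using b by (simp add: bij_imp_bij_inv)
  ultimately show "\<exists>f. bij f \<and> (\<forall>r xs. B r xs \<longleftrightarrow> A r (map f xs))" by blast
qed

lemma iso_trans: "iso A B \<Longrightarrow> iso B C \<Longrightarrow> iso A C"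
  unfolding iso_def
proof (elim exE conjE)
  fix f g assume "bij f" "\<forall>r xs. A r xs \<longleftrightarrow> B r (map f xs)" "bij g" "\<forall>r xs. B r xs \<longleftrightarrow> C r (map g xs)"
  then show "\<exists>f. bij f \<and> (\<forall>r xs. A r xs \<longleftrightarrow> C r (map f xs))"
    by (intro exI[of _ "g \<circ> f"]) (auto simp: bij_comp)
qed

lemma sat_qf_iso:
  assumes b: "bij f" and h: "\<forall>r xs. A r xs \<longleftrightarrow> B r (map f xs)"
  shows "sat_qf A v q \<longleftrightarrow> sat_qf B (f \<circ> v) q"
proof (induction q)
  case (QEq a b) then show ?case using b by (auto simp: bij_def inj_eq)
qed (use h in \<open>auto simp: comp_def\<close>)

lemma sat_iso:
  assumes b: "bij f" and h: "\<forall>r xs. A r xs \<longleftrightarrow> B r (map f xs)"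
  shows "sat A v \<phi> \<longleftrightarrow> sat B (f \<circ> v) \<phi>"
proof (induction \<phi> arbitrary: v)
  case (QF q) then show ?case using sat_qf_iso[OF b h, of v q] by (simp add: comp_def)
next
  case (BigOr I ys \<psi>)
  show ?case
  proof
    assume "sat A v (BigOr I ys \<psi>)"
    then obtain i w where "i \<in> I" "\<forall>x. x \<notin> set (ys i) \<longrightarrow> w x = v x" "sat A w (\<psi> i)" by auto
    then show "sat B (f \<circ> v) (BigOr I ys \<psi>)" using BigOr[of "\<psi> i" w]
      by (auto simp: comp_def intro!: bexI[of _ i] exI[of _ "f \<circ> w"])
  next
    assume "sat B (f \<circ> v) (BigOr I ys \<psi>)"
    then obtain i w where i: "i \<in> I" "\<forall>x. x \<notin> set (ys i) \<longrightarrow> w x = (f \<circ> v) x" "sat B w (\<psi> i)" by auto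
    have e: "(\<lambda>a. f (inv f (w a))) = w" using b by (auto simp: bij_def surj_f_inv_f)
    have ag: "\<forall>x. x \<notin> set (ys i) \<longrightarrow> (inv f \<circ> w) x = v x" using i b by (auto simp: bij_def)
    have "sat A (inv f \<circ> w) (\<psi> i)" using BigOr[of "\<psi> i" "inv f \<circ> w"] i e by (auto simp: comp_def)
    then show "sat A v (BigOr I ys \<psi>)" using ag i(1) by (auto intro!: bexI[of _ i] exI[of _ "inv f \<circ> w"])
  qed
next
  case (BigAnd I ys \<psi>)
  show ?case
  proof
    assume a: "sat A v (BigAnd I ys \<psi>)"
    show "sat B (f \<circ> v) (BigAnd I ys \<psi>)"
    proof (simp, intro ballI allI impI)
      fix i w assume i: "i \<in> I" "\<forall>x. x \<notin> set (ys i) \<longrightarrow> w x = f (v x)"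
      have e: "(\<lambda>a. f (inv f (w a))) = w" using b by (auto simp: bij_def surj_f_inv_f)
      have "\<forall>x. x \<notin> set (ys i) \<longrightarrow> (inv f \<circ> w) x = v x" using i b by (auto simp: bij_def)
      then have "sat A (inv f \<circ> w) (\<psi> i)" using a i by auto
      then show "sat B w (\<psi> i)" using BigAnd[of "\<psi> i" "inv f \<circ> w"] i e by auto
    qed
  next
    assume a: "sat B (f \<circ> v) (BigAnd I ys \<psi>)"
    show "sat A v (BigAnd I ys \<psi>)"
    proof (simp, intro ballI allI impI)
      fix i w assume i: "i \<in> I" "\<forall>x. x \<notin> set (ys i) \<longrightarrow> w x = v x"
      then have "sat B (f \<circ> w) (\<psi> i)" using a by auto
      then show "sat A w (\<psi> i)" using BigAnd[of "\<psi> i" w] i by (auto simp: comp_def)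
    qed
  qed
qed

lemma sat_qf_agree: "(\<forall>x\<in>fv_qf q. v x = v' x) \<Longrightarrow> sat_qf S v q \<longleftrightarrow> sat_qf S v' q"
proof (induction q)
  case (QAtom r xs)
  then have "map v xs = map v' xs" by (simp add: map_eq_conv)
  then show ?case by (simp only: sat_qf.simps)
qed auto

lemma sat_agree: "(\<forall>x\<in>fv \<phi>. v x = v' x) \<Longrightarrow> sat S v \<phi> \<longleftrightarrow> sat S v' \<phi>"
proof (induction \<phi> arbitrary: v v')
  case (QF q) then show ?case using sat_qf_agree by simp
next
  case (BigOr I ys \<psi>)
  show ?case
  proof
    assume "sat S v (BigOr I ys \<psi>)"
    then obtain i w where i: "i \<in> I" "\<forall>x. x \<notin> set (ys i) \<longrightarrow> w x = v x" "sat S w (\<psi> i)" by auto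
    let ?w = "\<lambda>x. if x \<in> set (ys i) then w x else v' x"
    have "\<forall>x\<in>fv (\<psi> i). w x = ?w x" using i BigOr.prems by auto
    then have "sat S ?w (\<psi> i)" using BigOr.IH[of "\<psi> i" w ?w] i by auto
    then show "sat S v' (BigOr I ys \<psi>)" using i by (auto intro!: bexI[of _ i] exI[of _ ?w])
  next
    assume "sat S v' (BigOr I ys \<psi>)"
    then obtain i w where i: "i \<in> I" "\<forall>x. x \<notin> set (ys i) \<longrightarrow> w x = v' x" "sat S w (\<psi> i)" by auto
    let ?w = "\<lambda>x. if x \<in> set (ys i) then w x else v x"
    have "\<forall>x\<in>fv (\<psi> i). w x = ?w x" using i BigOr.prems by auto
    then have "sat S ?w (\<psi> i)" using BigOr.IH[of "\<psi> i" w ?w] i by auto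
    then show "sat S v (BigOr I ys \<psi>)" using i by (auto intro!: bexI[of _ i] exI[of _ ?w])
  qed
next
  case (BigAnd I ys \<psi>)
  show ?case
  proof
    assume a: "sat S v (BigAnd I ys \<psi>)"
    show "sat S v' (BigAnd I ys \<psi>)"
    proof (simp, intro ballI allI impI)
      fix i w assume i: "i \<in> I" "\<forall>x. x \<notin> set (ys i) \<longrightarrow> w x = v' x"
      let ?w = "\<lambda>x. if x \<in> set (ys i) then w x else v x"
      have "sat S ?w (\<psi> i)" using a i by auto
      moreover have "\<forall>x\<in>fv (\<psi> i). ?w x = w x" using i BigAnd.prems by auto
      ultimately show "sat S w (\<psi> i)" using BigAnd.IH[of "\<psi> i" ?w w] i by auto
    qed
  next
    assume a: "sat S v' (BigAnd I ys \<psi>)"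
    show "sat S v (BigAnd I ys \<psi>)"
    proof (simp, intro ballI allI impI)
      fix i w assume i: "i \<in> I" "\<forall>x. x \<notin> set (ys i) \<longrightarrow> w x = v x"
      let ?w = "\<lambda>x. if x \<in> set (ys i) then w x else v' x"
      have "sat S ?w (\<psi> i)" using a i by auto
      moreover have "\<forall>x\<in>fv (\<psi> i). ?w x = w x" using i BigAnd.prems by auto
      ultimately show "sat S w (\<psi> i)" using BigAnd.IH[of "\<psi> i" ?w w] i by auto
    qed
  qed
qed

lemma models_iso: assumes "iso A B" "sentence \<phi>" shows "models A \<phi> \<longleftrightarrow> models B \<phi>"
proof -
  obtain f where f: "bij f" "\<forall>r xs. A r xs \<longleftrightarrow> B r (map f xs)" using assms(1) unfolding iso_def by blast
  have "models A \<phi> \<longleftrightarrow> sat B (f \<circ> (\<lambda>_. 0)) \<phi>" unfolding models_def using sat_iso[OF f] by blast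
  also have "\<dots> \<longleftrightarrow> models B \<phi>" unfolding models_def using sat_agree[of \<phi>] assms(2) by (simp add: sentence_def)
  finally show ?thesis .
qed



definition restrictTo :: "str \<Rightarrow> nat \<Rightarrow> str" where
  "restrictTo D s = (\<lambda>r xs. D r xs \<and> set xs \<subseteq> {0..s})"

lemma snd_restr: "restr S s = (s, restrictTo S s)"
  by (simp add: restr_def restrictTo_def)

lemma restrictTo_restrictTo: "s' \<le> s \<Longrightarrow> restrictTo (restrictTo S s) s' = restrictTo S s'"
  by (auto simp: restrictTo_def fun_eq_iff)

lemma sat_qf_restrictTo: "(\<forall>x. w x \<le> s) \<Longrightarrow> sat_qf (restrictTo S s) w q \<longleftrightarrow> sat_qf S w q"
  by (induction q) (auto simp: restrictTo_def)

definition pi1 :: "form \<Rightarrow> bool" where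
  "pi1 \<chi> \<longleftrightarrow> (\<exists>q. \<chi> = QF q) \<or> (\<exists>I2 zs \<theta>. \<chi> = BigAnd I2 zs \<theta> \<and> (\<forall>l\<in>I2. \<exists>q. \<theta> l = QF q))"

lemma sig0_shape: "SigmaInf 0 \<chi> \<Longrightarrow> \<exists>q. \<chi> = QF q"
  by (erule SigmaInf.cases) auto

lemma pi_shape: "PiInf \<beta> \<chi> \<Longrightarrow> \<beta> < 2 \<Longrightarrow> pi1 \<chi>"
proof (erule PiInf.cases)
  fix \<alpha> I \<psi> ys assume "\<beta> < 2" "\<chi> = BigAnd I ys \<psi>" "\<beta> = \<alpha>" "0 < \<alpha>"
    "\<forall>i\<in>I. \<exists>\<beta><\<alpha>. SigmaInf \<beta> (\<psi> i)"
  then show "pi1 \<chi>" unfolding pi1_def using sig0_shape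
    by (metis less_2_cases_iff less_one not_less_iff_gr_or_eq)
qed (auto simp: pi1_def)

lemma sig2_shape: "SigmaInf 2 \<phi> \<Longrightarrow> \<exists>I ys \<psi>. \<phi> = BigOr I ys \<psi> \<and> (\<forall>i\<in>I. pi1 (\<psi> i))"
  by (erule SigmaInf.cases) (auto intro: pi_shape)

definition refuted :: "str \<Rightarrow> nat \<Rightarrow> form \<Rightarrow> (nat \<Rightarrow> nat) \<Rightarrow> bool" where
  "refuted D s \<chi> w = (case \<chi> of QF q \<Rightarrow> (\<forall>x. w x \<le> s) \<and> \<not> sat_qf D w q
     | BigAnd I2 zs \<theta> \<Rightarrow> (\<exists>l\<in>I2. \<exists>w'. (\<forall>x. x \<notin> set (zs l) \<longrightarrow> w' x = w x) \<and> (\<forall>x. w' x \<le> s) \<and> \<not> sat D w' (\<theta> l))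
     | BigOr _ _ _ \<Rightarrow> False)"

definition candP :: "str \<Rightarrow> nat \<Rightarrow> form \<Rightarrow> nat \<Rightarrow> bool" where
  "candP D s \<phi> n = (case \<phi> of BigOr I ys \<psi> \<Rightarrow>
      (\<exists>i w. i \<in> I \<and> i \<le> n \<and> (\<forall>x. x \<notin> set (ys i) \<longrightarrow> w x = 0) \<and> (\<forall>x. w x \<le> n) \<and> \<not> refuted D s (\<psi> i) w)
    | _ \<Rightarrow> False)"

definition cval :: "str \<Rightarrow> nat \<Rightarrow> form \<Rightarrow> nat" where
  "cval D s \<phi> = (if \<exists>n. candP D s \<phi> n then LEAST n. candP D s \<phi> n else s)"

lemma not_refuted:
  assumes "pi1 \<chi>" "sat S w \<chi>" shows "\<not> refuted (restrictTo S s) s \<chi> w"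
  using assms sat_qf_restrictTo unfolding pi1_def refuted_def
  by (auto; metis sat.simps(1))

lemma bound_fun: "finite F \<Longrightarrow> (\<forall>x. x \<notin> F \<longrightarrow> f x \<le> (n::nat)) \<Longrightarrow> \<forall>x. f x \<le> n + sum f F"
proof (intro allI)
  fix x assume "finite F" "\<forall>x. x \<notin> F \<longrightarrow> f x \<le> n"
  then show "f x \<le> n + sum f F"
    by (cases "x \<in> F") (auto simp: member_le_sum trans_le_add2)
qed

lemma eventually_refuted:
  assumes "pi1 \<chi>" "\<not> sat S w \<chi>" "\<forall>x. w x \<le> n"
  shows "\<exists>T. \<forall>s\<ge>T. refuted (restrictTo S s) s \<chi> w"
  using assms(1) unfolding pi1_def
proof (elim disjE exE conjE)
  fix q assume "\<chi> = QF q"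
  show ?thesis
  proof (intro exI[of _ n] allI impI)
    fix s assume "n \<le> s"
    then have "\<forall>x. w x \<le> s" using assms(3) le_trans by blast
    then show "refuted (restrictTo S s) s \<chi> w"
      using assms(2) \<open>\<chi> = QF q\<close> sat_qf_restrictTo[of w s S q] by (simp add: refuted_def)
  qed
next
  fix I2 zs \<theta> assume ch: "\<chi> = BigAnd I2 zs \<theta>" "\<forall>l\<in>I2. \<exists>q. \<theta> l = QF q"
  from assms(2) ch obtain l w' where l: "l \<in> I2" "\<forall>x. x \<notin> set (zs l) \<longrightarrow> w' x = w x" "\<not> sat S w' (\<theta> l)"
    by auto
  obtain q where q: "\<theta> l = QF q" using ch l by auto
  have "\<forall>x. x \<notin> set (zs l) \<longrightarrow> w' x \<le> n" using l assms(3) by auto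
  then have b: "\<forall>x. w' x \<le> n + sum w' (set (zs l))" by (intro bound_fun) auto
  show ?thesis
  proof (intro exI[of _ "n + sum w' (set (zs l))"] allI impI)
    fix s assume s: "n + sum w' (set (zs l)) \<le> s"
    then have "\<forall>x. w' x \<le> s" using b le_trans by blast
    then show "refuted (restrictTo S s) s \<chi> w" using l q ch sat_qf_restrictTo[of w' s S q]
      unfolding refuted_def by (auto intro!: bexI[of _ l] exI[of _ w'])
  qed
qed

lemma cval_bounded:
  assumes "\<phi> = BigOr I ys \<psi>" "\<forall>i\<in>I. pi1 (\<psi> i)" "models S \<phi>"
  shows "\<exists>L. \<forall>s. cval (restrictTo S s) s \<phi> \<le> L"
proof -
  from assms obtain i w where i: "i \<in> I" "\<forall>x. x \<notin> set (ys i) \<longrightarrow> w x = 0" "sat S w (\<psi> i)"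
    by (auto simp: models_def)
  have b: "\<forall>x. w x \<le> 0 + sum w (set (ys i))" using i by (intro bound_fun) auto
  define n0 where "n0 = i + sum w (set (ys i))"
  have "\<forall>s. candP (restrictTo S s) s \<phi> n0"
    unfolding candP_def assms(1) using i b not_refuted[of "\<psi> i" S w] assms(2)
    by (auto simp: n0_def intro!: exI[of _ i] exI[of _ w] intro: le_trans)
  then have "\<forall>s. cval (restrictTo S s) s \<phi> \<le> n0" unfolding cval_def by (auto intro: Least_le)
  then show ?thesis by blast
qed

lemma cval_diverges:
  assumes "\<phi> = BigOr I ys \<psi>" "\<forall>i\<in>I. pi1 (\<psi> i)" "\<not> models S \<phi>"
  shows "\<forall>\<^sub>F s in sequentially. n < cval (restrictTo S s) s \<phi>"
proof -
  define C where "C = {(i, w). i \<in> I \<and> i \<le> n \<and> (\<forall>x. x \<notin> set (ys i) \<longrightarrow> w x = 0) \<and> (\<forall>x. w x \<le> n)}"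
  define F where "F = (\<Union>i\<le>n. set (ys i))"
  have "C \<subseteq> {..n} \<times> {f. \<forall>x. (x \<in> F \<longrightarrow> f x \<in> {..n}) \<and> (x \<notin> F \<longrightarrow> f x = 0)}"
    unfolding C_def F_def by auto
  moreover have "finite F" unfolding F_def by auto
  moreover have "finite {f::nat\<Rightarrow>nat. \<forall>x. (x \<in> F \<longrightarrow> f x \<in> {..n}) \<and> (x \<notin> F \<longrightarrow> f x = 0)}"
    using finite_set_of_finite_funs[OF \<open>finite F\<close>, of "{..n}" 0] by simp
  ultimately have fin: "finite C"
    by (meson finite_SigmaI finite_atMost finite_subset)
  have "\<forall>c\<in>C. \<forall>\<^sub>F s in sequentially. refuted (restrictTo S s) s (\<psi> (fst c)) (snd c)"
  proof
    fix c assume c: "c \<in> C"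
    obtain i w where cw: "c = (i, w)" by force
    have "\<not> sat S w (\<psi> i)"
    proof
      assume "sat S w (\<psi> i)"
      moreover have "i \<in> I" "\<forall>x. x \<notin> set (ys i) \<longrightarrow> w x = 0" using c cw unfolding C_def by auto
      ultimately have "models S \<phi>" unfolding models_def assms(1) by auto
      then show False using assms(3) by simp
    qed
    then obtain T where "\<forall>s\<ge>T. refuted (restrictTo S s) s (\<psi> i) w"
      using eventually_refuted[of "\<psi> i" S w n] c cw assms(2) unfolding C_def by auto
    then show "\<forall>\<^sub>F s in sequentially. refuted (restrictTo S s) s (\<psi> (fst c)) (snd c)"
      using cw by (auto simp: eventually_sequentially)
  qed
  then have ev: "\<forall>\<^sub>F s in sequentially. \<forall>c\<in>C. refuted (restrictTo S s) s (\<psi> (fst c)) (snd c)"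
    using fin by (simp add: eventually_ball_finite)
  have ev2: "\<forall>\<^sub>F s in sequentially. n < s" by (simp add: eventually_gt_at_top)
  show ?thesis
    using ev ev2
  proof (rule eventually_elim2)
    fix s assume r: "\<forall>c\<in>C. refuted (restrictTo S s) s (\<psi> (fst c)) (snd c)" and ns: "n < s"
    have nc: "\<not> candP (restrictTo S s) s \<phi> m" if "m \<le> n" for m
    proof
      assume "candP (restrictTo S s) s \<phi> m"
      then obtain i w where "i \<in> I" "i \<le> m" "\<forall>x. x \<notin> set (ys i) \<longrightarrow> w x = 0" "\<forall>x. w x \<le> m"
        "\<not> refuted (restrictTo S s) s (\<psi> i) w" unfolding candP_def assms(1) by auto
      moreover have "(i, w) \<in> C" using calculation that unfolding C_def by (auto intro: le_trans)
      ultimately show False using r by auto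
    qed
    show "n < cval (restrictTo S s) s \<phi>"
    proof (cases "\<exists>m. candP (restrictTo S s) s \<phi> m")
      case True
      then have "candP (restrictTo S s) s \<phi> (LEAST m. candP (restrictTo S s) s \<phi> m)" by (rule LeastI_ex)
      then have "n < (LEAST m. candP (restrictTo S s) s \<phi> m)" using nc not_le by blast
      then show ?thesis using True unfolding cval_def by simp
    next
      case False then show ?thesis using ns unfolding cval_def by auto
    qed
  qed
qed



primrec cntW :: "(nat \<Rightarrow> nat \<Rightarrow> bool) \<Rightarrow> nat \<Rightarrow> nat" where
  "cntW W 0 = 0"
| "cntW W (Suc s) = cntW W s + (if W (cntW W s) s then 1 else 0)"

lemma cntW_cong: "(\<forall>N s'. s' < s \<longrightarrow> W N s' = W' N s') \<Longrightarrow> cntW W s = cntW W' s"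
  by (induction s) auto

lemma cntW_mono: "s \<le> s' \<Longrightarrow> cntW W s \<le> cntW W s'"
  by (induction s' rule: dec_induct) auto

lemma cntW_const: assumes "\<forall>s\<ge>s1. \<not> W (cntW W s) s" "s1 \<le> s" shows "cntW W s = cntW W s1"
  using assms(2) by (induction s rule: dec_induct) (use assms(1) in auto)

lemma cntW_inf:
  assumes "\<forall>N. \<exists>T. \<forall>s\<ge>T. G s \<longrightarrow> W N s" "infinite {s. G s}"
  shows "infinite {s. W (cntW W s) s}"
proof
  assume "finite {s. W (cntW W s) s}"
  then obtain m where m: "\<forall>s\<in>{s. W (cntW W s) s}. s \<le> m" using finite_nat_set_iff_bounded_le by blast
  then have nw: "\<forall>s\<ge>Suc m. \<not> W (cntW W s) s" by auto
  obtain T where T: "\<forall>s\<ge>T. G s \<longrightarrow> W (cntW W (Suc m)) s" using assms(1) by blast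
  obtain s where s: "s \<ge> max T (Suc m)" "G s" using assms(2) unfolding infinite_nat_iff_unbounded_le by blast
  have "cntW W s = cntW W (Suc m)" using cntW_const[of "Suc m" W s] nw s by auto
  then have "W (cntW W s) s" using T s by auto
  then show False using nw s by auto
qed

lemma cntW_fin:
  assumes "\<forall>N\<ge>N0. \<forall>s\<ge>T. \<not> W N s"
  shows "finite {s. W (cntW W s) s}"
proof (rule ccontr)
  assume inf: "infinite {s. W (cntW W s) s}"
  have "\<exists>s. m \<le> cntW W s" for m
  proof (induction m)
    case (Suc m)
    then obtain s where "m \<le> cntW W s" by blast
    moreover obtain s' where "s' \<ge> s" "W (cntW W s') s'" using inf unfolding infinite_nat_iff_unbounded_le by blast
    ultimately have "Suc m \<le> cntW W (Suc s')" using cntW_mono[of s s' W] by auto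
    then show ?case by blast
  qed auto
  then obtain s0 where s0: "N0 \<le> cntW W s0" by blast
  obtain s' where s': "s' \<ge> max s0 T" "W (cntW W s') s'" using inf unfolding infinite_nat_iff_unbounded_le by blast
  have "N0 \<le> cntW W s'" using s0 cntW_mono[of s0 s' W] s' by auto
  then show False using assms s' by auto
qed

definition beats :: "(str \<Rightarrow> str \<Rightarrow> form) \<Rightarrow> str \<Rightarrow> str \<Rightarrow> str \<Rightarrow> nat \<Rightarrow> bool" where
  "beats \<Phi> D A B s \<longleftrightarrow> cval D s (\<Phi> A B) < cval D s (\<Phi> B A)"

definition Wn :: "str set \<Rightarrow> (str \<Rightarrow> str \<Rightarrow> form) \<Rightarrow> (nat \<Rightarrow> str) \<Rightarrow> str \<Rightarrow> nat \<Rightarrow> nat \<Rightarrow> bool" where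
  "Wn K \<Phi> Dt A N s \<longleftrightarrow> fst (prod_decode s) = to_nat_on K A \<and>
     (\<forall>B\<in>K. to_nat_on K B < N \<longrightarrow> B \<noteq> A \<longrightarrow> beats \<Phi> (Dt s) A B s)"

definition learner :: "str set \<Rightarrow> (str \<Rightarrow> str \<Rightarrow> form) \<Rightarrow> nat \<times> str \<Rightarrow> str option" where
  "learner K \<Phi> x = (let s = fst x; A = from_nat_into K (fst (prod_decode s)); Dt = restrictTo (snd x) in
     if A \<in> K \<and> Wn K \<Phi> Dt A (cntW (Wn K \<Phi> Dt A) s) s then Some A else None)"

lemma learner_range: "learner K \<Phi> x \<in> insert None (Some ` K)"
  by (auto simp: learner_def Let_def)

lemma learner_restr:
  assumes "countable K" "A \<in> K"
  shows "learner K \<Phi> (restr S s) = Some A \<longleftrightarrow> Wn K \<Phi> (restrictTo S) A (cntW (Wn K \<Phi> (restrictTo S) A) s) s"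
proof -
  have e: "Wn K \<Phi> (restrictTo (restrictTo S s)) B N s' = Wn K \<Phi> (restrictTo S) B N s'" if "s' \<le> s" for B N s'
    using restrictTo_restrictTo[OF that] unfolding Wn_def by simp
  have c: "cntW (Wn K \<Phi> (restrictTo (restrictTo S s)) B) s = cntW (Wn K \<Phi> (restrictTo S) B) s" for B
    by (rule cntW_cong) (use e in auto)
  show ?thesis
  proof
    assume h: "learner K \<Phi> (restr S s) = Some A"
    define A' where "A' = from_nat_into K (fst (prod_decode s))"
    have "A' \<in> K \<and> Wn K \<Phi> (restrictTo (restrictTo S s)) A' (cntW (Wn K \<Phi> (restrictTo (restrictTo S s)) A') s) s \<and> A' = A"
      using h unfolding learner_def snd_restr Let_def A'_def by (simp split: if_splits)
    then have a: "A' = A" and wA: "Wn K \<Phi> (restrictTo (restrictTo S s)) A' (cntW (Wn K \<Phi> (restrictTo (restrictTo S s)) A') s) s"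
      by auto
    from wA show "Wn K \<Phi> (restrictTo S) A (cntW (Wn K \<Phi> (restrictTo S) A) s) s"
      unfolding a using c[of A] e[of s A] by simp
  next
    assume w: "Wn K \<Phi> (restrictTo S) A (cntW (Wn K \<Phi> (restrictTo S) A) s) s"
    then have "fst (prod_decode s) = to_nat_on K A" unfolding Wn_def by simp
    then have "from_nat_into K (fst (prod_decode s)) = A" using assms by simp
    then have "learner K \<Phi> (restr S s) = (if A \<in> K \<and> Wn K \<Phi> (restrictTo (restrictTo S s)) A (cntW (Wn K \<Phi> (restrictTo (restrictTo S s)) A) s) s then Some A else None)"
      unfolding learner_def snd_restr Let_def by simp
    then show "learner K \<Phi> (restr S s) = Some A"
      using c[of A] e[of s A] w assms(2) by simp
  qed
qed

lemma sig2_cval_true: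
  assumes "sentence \<phi>" "SigmaInf 2 \<phi>" "models S \<phi>"
  shows "\<exists>L. \<forall>s. cval (restrictTo S s) s \<phi> \<le> L"
  using sig2_shape[OF assms(2)] cval_bounded assms(3) by blast

lemma sig2_cval_false:
  assumes "sentence \<phi>" "SigmaInf 2 \<phi>" "\<not> models S \<phi>"
  shows "\<forall>\<^sub>F s in sequentially. n < cval (restrictTo S s) s \<phi>"
  using sig2_shape[OF assms(2)] cval_diverges assms(3) by blast

lemma eventually_beats:
  assumes "sentence \<phi>1" "SigmaInf 2 \<phi>1" "models S \<phi>1"
    "sentence \<phi>2" "SigmaInf 2 \<phi>2" "\<not> models S \<phi>2"
  shows "\<forall>\<^sub>F s in sequentially. cval (restrictTo S s) s \<phi>1 < cval (restrictTo S s) s \<phi>2"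
proof -
  obtain L where L: "\<forall>s. cval (restrictTo S s) s \<phi>1 \<le> L" using sig2_cval_true assms by blast
  show ?thesis using sig2_cval_false[OF assms(4-6), of L]
    by (rule eventually_mono) (use L le_less_trans in blast)
qed

lemma antichain_PL:
  assumes fam: "family sig K" and ac: "Sigma2_antichain K"
  shows "PL_learnable sig K"
proof -
  have cK: "countable K" using fam unfolding family_def by simp
  define \<Phi> where "\<Phi> A B = (SOME \<phi>. sentence \<phi> \<and> SigmaInf 2 \<phi> \<and> models A \<phi> \<and> \<not> models B \<phi>)" for A B
  have \<Phi>: "sentence (\<Phi> A B) \<and> SigmaInf 2 (\<Phi> A B) \<and> models A (\<Phi> A B) \<and> \<not> models B (\<Phi> A B)"
    if "A \<in> K" "B \<in> K" "A \<noteq> B" for A B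
  proof -
    have "\<exists>\<phi>. sentence \<phi> \<and> SigmaInf 2 \<phi> \<and> models A \<phi> \<and> \<not> models B \<phi>"
      using ac that unfolding Sigma2_antichain_def by blast
    then show ?thesis unfolding \<Phi>_def by (rule someI_ex)
  qed
  let ?M = "learner K \<Phi>"
  have "\<forall>S\<in>LD sig K. \<forall>A\<in>K. infinite {n. ?M (restr S n) = Some A} \<longleftrightarrow> iso A S"
  proof (intro ballI)
    fix S A assume S: "S \<in> LD sig K" and A: "A \<in> K"
    obtain k where k: "k \<in> K" "iso k S" using S unfolding LD_def by blast
    let ?W = "\<lambda>B. Wn K \<Phi> (restrictTo S) B"
    have set_eq: "{n. ?M (restr S n) = Some B} = {n. ?W B (cntW (?W B) n) n}" if "B \<in> K" for B
      using learner_restr[OF cK that] by auto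
    have beatsk: "\<forall>\<^sub>F s in sequentially. beats \<Phi> (restrictTo S s) k B s" if "B \<in> K" "B \<noteq> k" for B
    proof -
      have p1: "sentence (\<Phi> k B)" "SigmaInf 2 (\<Phi> k B)" "models S (\<Phi> k B)"
        using \<Phi>[OF k(1) that(1)] that models_iso[OF k(2)] by auto
      have p2: "sentence (\<Phi> B k)" "SigmaInf 2 (\<Phi> B k)" "\<not> models S (\<Phi> B k)"
        using \<Phi>[OF that(1) k(1)] that models_iso[OF k(2)] by auto
      show ?thesis using eventually_beats[OF p1 p2] unfolding beats_def .
    qed
    show "infinite {n. ?M (restr S n) = Some A} \<longleftrightarrow> iso A S"
    proof (cases "A = k")
      case True
      have "infinite {s. ?W k (cntW (?W k) s) s}"
      proof (rule cntW_inf[where G = "\<lambda>s. fst (prod_decode s) = to_nat_on K k" and W = "?W k"])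
        show "\<forall>N. \<exists>T. \<forall>s\<ge>T. fst (prod_decode s) = to_nat_on K k \<longrightarrow> ?W k N s"
        proof
          fix N
          define F where "F = {B\<in>K. to_nat_on K B < N}"
          have "inj_on (to_nat_on K) F" using inj_on_to_nat_on[OF cK] unfolding F_def by (rule inj_on_subset) auto
          moreover have "to_nat_on K ` F \<subseteq> {..<N}" unfolding F_def by auto
          ultimately have fF: "finite F" using finite_imageD finite_subset[of _ "{..<N}"] by blast
          have "\<forall>B\<in>F - {k}. \<forall>\<^sub>F s in sequentially. beats \<Phi> (restrictTo S s) k B s"
            using beatsk unfolding F_def by auto
          then have "\<forall>\<^sub>F s in sequentially. \<forall>B\<in>F - {k}. beats \<Phi> (restrictTo S s) k B s"
            using fF by (simp add: eventually_ball_finite)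
          then obtain T where "\<forall>s\<ge>T. \<forall>B\<in>F - {k}. beats \<Phi> (restrictTo S s) k B s"
            unfolding eventually_sequentially by blast
          then show "\<exists>T. \<forall>s\<ge>T. fst (prod_decode s) = to_nat_on K k \<longrightarrow> ?W k N s"
            unfolding Wn_def F_def by blast
        qed
        show "infinite {s. fst (prod_decode s) = to_nat_on K k}"
          unfolding infinite_nat_iff_unbounded_le
        proof
          fix m show "\<exists>n\<ge>m. n \<in> {s. fst (prod_decode s) = to_nat_on K k}"
            by (intro exI[of _ "prod_encode (to_nat_on K k, m)"]) (simp add: le_prod_encode_2)
        qed
      qed
      then show ?thesis using True set_eq[OF A] k by simp
    next
      case False
      have "\<forall>\<^sub>F s in sequentially. \<not> beats \<Phi> (restrictTo S s) A k s"
      proof -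
        have p1: "sentence (\<Phi> k A)" "SigmaInf 2 (\<Phi> k A)" "models S (\<Phi> k A)"
          using \<Phi>[OF k(1) A] False models_iso[OF k(2)] by auto
        have p2: "sentence (\<Phi> A k)" "SigmaInf 2 (\<Phi> A k)" "\<not> models S (\<Phi> A k)"
          using \<Phi>[OF A k(1)] False models_iso[OF k(2)] by auto
        show ?thesis using eventually_beats[OF p1 p2] unfolding beats_def
          by (rule eventually_mono) simp
      qed
      then obtain T where T: "\<forall>s\<ge>T. \<not> beats \<Phi> (restrictTo S s) A k s"
        unfolding eventually_sequentially by blast
      have "\<forall>N\<ge>Suc (to_nat_on K k). \<forall>s\<ge>T. \<not> ?W A N s"
      proof (intro allI impI notI)
        fix N s assume N: "Suc (to_nat_on K k) \<le> N" and s: "T \<le> s" and w: "?W A N s"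
        then have "beats \<Phi> (restrictTo S s) A k s" using k(1) False unfolding Wn_def by auto
        then show False using T s by blast
      qed
      then have "finite {s. ?W A (cntW (?W A) s) s}" by (rule cntW_fin[where W="?W A"])
      moreover have "\<not> iso A S"
      proof
        assume "iso A S"
        then have "iso A k" using iso_sym[OF k(2)] iso_trans by blast
        then show False using fam A k(1) False unfolding family_def by blast
      qed
      ultimately show ?thesis using set_eq[OF A] by simp
    qed
  qed
  then show ?thesis unfolding PL_learnable_def using learner_range by blast
qed



fun conjL :: "qf list \<Rightarrow> qf" where
  "conjL [] = QEq 0 0"
| "conjL (q # qs) = QAnd q (conjL qs)"

lemma sat_conjL: "sat_qf T u (conjL qs) \<longleftrightarrow> (\<forall>q\<in>set qs. sat_qf T u q)"
  by (induction qs) auto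

lemma fv_conjL: "fv_qf (conjL qs) \<subseteq> {0} \<union> (\<Union>q\<in>set qs. fv_qf q)"
  by (induction qs) auto

definition litA :: "str \<Rightarrow> (nat \<Rightarrow> nat) \<Rightarrow> nat \<Rightarrow> nat list \<Rightarrow> qf" where
  "litA S v r xs = (if S r (map v xs) then QAtom r xs else QNeg (QAtom r xs))"

definition litE :: "(nat \<Rightarrow> nat) \<Rightarrow> nat \<Rightarrow> nat \<Rightarrow> qf" where
  "litE v a b = (if v a = v b then QEq a b else QNeg (QEq a b))"

definition diag :: "nat list \<Rightarrow> str \<Rightarrow> (nat \<Rightarrow> nat) \<Rightarrow> nat \<Rightarrow> qf" where
  "diag sig S v N = conjL ([litA S v r xs. r \<leftarrow> [0..<length sig], xs \<leftarrow> List.n_lists (sig!r) [0..<N]]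
      @ [litE v a b. a \<leftarrow> [0..<N], b \<leftarrow> [0..<N]])"

lemma sat_litA: "sat_qf T u (litA S v r xs) \<longleftrightarrow> (T r (map u xs) \<longleftrightarrow> S r (map v xs))"
  by (auto simp: litA_def)

lemma sat_litE: "sat_qf T u (litE v a b) \<longleftrightarrow> (u a = u b \<longleftrightarrow> v a = v b)"
  by (auto simp: litE_def)

lemma sat_diag:
  assumes "wf_str sig S" "wf_str sig T"
  shows "sat_qf T u (diag sig S v N) \<longleftrightarrow>
    (\<forall>r xs. set xs \<subseteq> {0..<N} \<longrightarrow> (T r (map u xs) \<longleftrightarrow> S r (map v xs))) \<and>
    (\<forall>a<N. \<forall>b<N. u a = u b \<longleftrightarrow> v a = v b)"
proof -
  have "sat_qf T u (diag sig S v N) \<longleftrightarrow>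
    (\<forall>r<length sig. \<forall>xs. length xs = sig!r \<and> set xs \<subseteq> {0..<N} \<longrightarrow> (T r (map u xs) \<longleftrightarrow> S r (map v xs))) \<and>
    (\<forall>a<N. \<forall>b<N. u a = u b \<longleftrightarrow> v a = v b)"
  proof -
    have "sat_qf T u (diag sig S v N) \<longleftrightarrow>
      (\<forall>r<length sig. \<forall>xs. length xs = sig!r \<and> set xs \<subseteq> {0..<N} \<longrightarrow> sat_qf T u (litA S v r xs)) \<and>
      (\<forall>a<N. \<forall>b<N. sat_qf T u (litE v a b))"
    proof -
      let ?L1 = "[litA S v r xs. r \<leftarrow> [0..<length sig], xs \<leftarrow> List.n_lists (sig!r) [0..<N]]"
      let ?L2 = "[litE v a b. a \<leftarrow> [0..<N], b \<leftarrow> [0..<N]]"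
      have s1: "set ?L1 = {litA S v r xs | r xs. r < length sig \<and> length xs = sig!r \<and> set xs \<subseteq> {0..<N}}"
        by (auto simp: set_n_lists) blast
      have s2: "set ?L2 = {litE v a b | a b. a < N \<and> b < N}" by auto blast
      have "sat_qf T u (diag sig S v N) \<longleftrightarrow> (\<forall>q\<in>set ?L1 \<union> set ?L2. sat_qf T u q)"
        unfolding diag_def sat_conjL by simp
      also have "\<dots> \<longleftrightarrow> (\<forall>r<length sig. \<forall>xs. length xs = sig!r \<and> set xs \<subseteq> {0..<N} \<longrightarrow> sat_qf T u (litA S v r xs)) \<and>
      (\<forall>a<N. \<forall>b<N. sat_qf T u (litE v a b))"
        unfolding s1 s2 by blast
      finally show ?thesis .
    qed
    then show ?thesis unfolding sat_litA sat_litE .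
  qed
  also have "\<dots> \<longleftrightarrow> (\<forall>r xs. set xs \<subseteq> {0..<N} \<longrightarrow> (T r (map u xs) \<longleftrightarrow> S r (map v xs))) \<and>
    (\<forall>a<N. \<forall>b<N. u a = u b \<longleftrightarrow> v a = v b)"
  proof -
    have "(\<forall>r xs. set xs \<subseteq> {0..<N} \<longrightarrow> (T r (map u xs) \<longleftrightarrow> S r (map v xs)))"
      if H: "\<forall>r<length sig. \<forall>xs. length xs = sig!r \<and> set xs \<subseteq> {0..<N} \<longrightarrow> (T r (map u xs) \<longleftrightarrow> S r (map v xs))"
    proof (intro allI impI)
      fix r xs assume xs: "set xs \<subseteq> {0..<N}"
      show "T r (map u xs) \<longleftrightarrow> S r (map v xs)"
      proof (cases "r < length sig \<and> length xs = sig ! r")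
        case True then show ?thesis using H xs by blast
      next
        case False
        then have "\<not> T r (map u xs)" "\<not> S r (map v xs)" using assms unfolding wf_str_def
          by (metis length_map)+
        then show ?thesis by simp
      qed
    qed
    then show ?thesis by blast
  qed
  finally show ?thesis .
qed

lemma fv_diag: "0 < N \<Longrightarrow> fv_qf (diag sig S v N) \<subseteq> {0..<N}"
proof -
  assume N: "0 < N"
  have "fv_qf (litA S v r xs) = set xs" for r xs by (simp add: litA_def)
  moreover have "fv_qf (litE v a b) = {a, b}" for a b by (simp add: litE_def)
  ultimately show ?thesis using fv_conjL[of "[litA S v r xs. r \<leftarrow> [0..<length sig], xs \<leftarrow> List.n_lists (sig!r) [0..<N]]
      @ [litE v a b. a \<leftarrow> [0..<N], b \<leftarrow> [0..<N]]"] N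
    unfolding diag_def by (auto simp: set_n_lists)
qed

definition wA :: "nat list \<Rightarrow> nat \<Rightarrow> nat" where
  "wA as x = (if x < length as then as ! x else 0)"

definition Jset :: "str \<Rightarrow> nat list \<Rightarrow> nat set" where
  "Jset A as = {j. fv_qf (fst (from_nat j :: qf \<times> nat)) \<subseteq> {0..<length as + snd (from_nat j :: qf \<times> nat)} \<and>
     (\<forall>w. (\<forall>x. x \<notin> set [length as..<length as + snd (from_nat j :: qf \<times> nat)] \<longrightarrow> w x = wA as x)
        \<longrightarrow> sat_qf A w (fst (from_nat j :: qf \<times> nat)))}"

definition ptype :: "str \<Rightarrow> nat list \<Rightarrow> form" where
  "ptype A as = BigOr {0} (\<lambda>_. [0..<length as])
     (\<lambda>_. BigAnd (Jset A as) (\<lambda>j. [length as..<length as + snd (from_nat j :: qf \<times> nat)])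
        (\<lambda>j. QF (fst (from_nat j :: qf \<times> nat))))"

lemma ptype_sentence: "sentence (ptype A as)"
proof -
  have "fv (BigAnd (Jset A as) (\<lambda>j. [length as..<length as + snd (from_nat j :: qf \<times> nat)])
        (\<lambda>j. QF (fst (from_nat j :: qf \<times> nat)))) \<subseteq> {0..<length as}"
  proof
    fix x assume "x \<in> fv (BigAnd (Jset A as) (\<lambda>j. [length as..<length as + snd (from_nat j :: qf \<times> nat)])
        (\<lambda>j. QF (fst (from_nat j :: qf \<times> nat))))"
    then obtain j where j: "j \<in> Jset A as" "x \<in> fv_qf (fst (from_nat j :: qf \<times> nat))"
      "x \<notin> set [length as..<length as + snd (from_nat j :: qf \<times> nat)]" by auto
    from j(1) have "fv_qf (fst (from_nat j :: qf \<times> nat)) \<subseteq> {0..<length as + snd (from_nat j :: qf \<times> nat)}"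
      unfolding Jset_def by blast
    then show "x \<in> {0..<length as}" using j(2,3) by auto
  qed
  then show ?thesis unfolding sentence_def ptype_def by auto
qed

lemma ptype_sigma2: "SigmaInf 2 (ptype A as)"
proof -
  have "PiInf 1 (BigAnd (Jset A as) (\<lambda>j. [length as..<length as + snd (from_nat j :: qf \<times> nat)])
        (\<lambda>j. QF (fst (from_nat j :: qf \<times> nat))))"
    by (rule piS) (auto intro!: exI[of _ "0::nat"] sig0)
  then show ?thesis unfolding ptype_def
    by (intro sigS) (auto intro!: exI[of _ "1::nat"])
qed

lemma ptype_models: "models A (ptype A as)"
  unfolding models_def ptype_def
  by (auto simp: Jset_def wA_def intro!: exI[of _ "wA as"])

lemma ext_bij:
  fixes f :: "nat \<Rightarrow> nat"
  assumes "inj_on f {0..<n}"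
  shows "\<exists>h. bij h \<and> (\<forall>x<n. h x = f x)"
proof -
  let ?X = "{0..<n}" and ?Y = "f ` {0..<n}"
  have iX: "infinite (- ?X)" unfolding Compl_eq_Diff_UNIV by (rule Diff_infinite_finite) (auto simp: infinite_UNIV_nat)
  have iY: "infinite (- ?Y)" unfolding Compl_eq_Diff_UNIV by (rule Diff_infinite_finite) (auto simp: infinite_UNIV_nat)
  have bX: "bij_betw (from_nat_into (- ?X)) UNIV (- ?X)" by (rule bij_betw_from_nat_into) (use iX in auto)
  have bY: "bij_betw (from_nat_into (- ?Y)) UNIV (- ?Y)" by (rule bij_betw_from_nat_into) (use iY in auto)
  define p where "p = from_nat_into (- ?Y) \<circ> inv_into UNIV (from_nat_into (- ?X))"
  have bp: "bij_betw p (- ?X) (- ?Y)" unfolding p_def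
    using bij_betw_trans[OF bij_betw_inv_into[OF bX] bY] .
  define h where "h x = (if x < n then f x else p x)" for x
  have b1: "bij_betw h ?X ?Y"
    using bij_betw_cong[of ?X h f ?Y] assms unfolding h_def by (auto simp: inj_on_imp_bij_betw)
  have b2: "bij_betw h (- ?X) (- ?Y)"
    using bij_betw_cong[of "- ?X" h p "- ?Y"] bp unfolding h_def by auto
  have "bij_betw h (?X \<union> - ?X) (?Y \<union> - ?Y)" by (rule bij_betw_combine[OF b1 b2]) auto
  then have "bij h" by simp
  then show ?thesis unfolding h_def by auto
qed

lemma iso_pullback: "bij h \<Longrightarrow> iso (\<lambda>r xs. B r (map h xs)) B"
  unfolding iso_def by blast

definition Pstep :: "nat list \<Rightarrow> nat \<Rightarrow> (nat \<times> str \<Rightarrow> str option) \<Rightarrow> str \<Rightarrow> str \<Rightarrow> nat list \<Rightarrow> bool" where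
  "Pstep as k M A B \<beta> \<longleftrightarrow> take (length as) \<beta> = as \<and> distinct \<beta> \<and> k \<in> set \<beta> \<and>
     (\<exists>t. length as \<le> t \<and> t < length \<beta> \<and>
        (\<forall>g. (\<forall>i<length \<beta>. g i = \<beta> ! i) \<longrightarrow> M (restr (\<lambda>r xs. A r (map g xs)) t) = Some B))"

lemma step:
  assumes wfA: "wf_str sig A" and wfB: "wf_str sig B"
    and learnB: "\<forall>C. wf_str sig C \<and> iso B C \<longrightarrow> infinite {t. M (restr C t) = Some B}"
    and H: "models B (ptype A as)"
    and dist: "distinct as"
  shows "\<exists>\<beta>. Pstep as k M A B \<beta>"
proof -
  define n where "n = length as"
  obtain wB where wB0: "\<forall>x. x \<notin> set [0..<n] \<longrightarrow> wB x = 0"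
    and HB: "\<forall>j\<in>Jset A as. \<forall>w. (\<forall>x. x \<notin> set [n..<n + snd (from_nat j :: qf \<times> nat)] \<longrightarrow> w x = wB x)
        \<longrightarrow> sat_qf B w (fst (from_nat j :: qf \<times> nat))"
    using H unfolding models_def ptype_def n_def by auto
  have key: "\<exists>w'. (\<forall>x. x \<notin> set [n..<n + m] \<longrightarrow> w' x = wA as x) \<and> \<not> sat_qf A w' q"
    if fvq: "fv_qf q \<subseteq> {0..<n + m}" and w: "\<forall>x. x \<notin> set [n..<n + m] \<longrightarrow> w x = wB x" and nw: "\<not> sat_qf B w q"
    for q m w
  proof -
    define j where "j = to_nat (q, m)"
    have fj: "(from_nat j :: qf \<times> nat) = (q, m)" unfolding j_def by simp
    have "j \<notin> Jset A as"
    proof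
      assume "j \<in> Jset A as"
      then have "sat_qf B w q" using HB w fj by fastforce
      then show False using nw by simp
    qed
    then show ?thesis using fvq fj unfolding Jset_def n_def by auto
  qed
  have injB: "inj_on wB {0..<n}"
  proof (rule inj_onI)
    fix a b assume a: "a \<in> {0..<n}" and b: "b \<in> {0..<n}" and e: "wB a = wB b"
    show "a = b"
    proof (rule ccontr)
      assume ne: "a \<noteq> b"
      have "\<exists>w'. (\<forall>x. x \<notin> set [n..<n + 0] \<longrightarrow> w' x = wA as x) \<and> \<not> sat_qf A w' (QNeg (QEq a b))"
        by (rule key[where w = wB]) (use a b e in auto)
      then have "wA as a = wA as b" by auto
      then have "as ! a = as ! b" using a b unfolding wA_def n_def by auto
      then show False using dist ne a b unfolding n_def by (simp add: nth_eq_iff_index_eq)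
    qed
  qed
  obtain h where h: "bij h" "\<forall>x<n. h x = wB x" using ext_bij[OF injB] by blast
  define C where "C = (\<lambda>r xs. B r (map h xs))"
  have wfC: "wf_str sig C" using wfB unfolding wf_str_def C_def by (metis length_map)
  have isoC: "iso B C" unfolding C_def by (rule iso_sym[OF iso_pullback[OF h(1)]])
  have "infinite {t. M (restr C t) = Some B}" using learnB wfC isoC by blast
  then obtain t where t: "n \<le> t" "M (restr C t) = Some B" unfolding infinite_nat_iff_unbounded_le by blast
  define N where "N = Suc t"
  define m where "m = N - n"
  have nm: "n + m = N" unfolding m_def N_def using t by auto
  define w0 where "w0 x = (if x < N then h x else 0)" for x
  have w0a: "\<forall>x. x \<notin> set [n..<n + m] \<longrightarrow> w0 x = wB x"
    using h wB0 t(1) unfolding w0_def nm N_def by auto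
  have "sat_qf B w0 (diag sig B h N)"
    unfolding sat_diag[OF wfB wfB]
  proof (intro conjI allI impI)
    fix r xs assume "set xs \<subseteq> {0..<N}"
    then have "map w0 xs = map h xs" unfolding w0_def by (auto simp: map_eq_conv)
    then show "B r (map w0 xs) \<longleftrightarrow> B r (map h xs)" by (simp del: map_eq_conv)
  next
    fix a b assume "a < N" "b < N"
    then show "w0 a = w0 b \<longleftrightarrow> h a = h b" unfolding w0_def by simp
  qed
  then have ns: "\<not> sat_qf B w0 (QNeg (diag sig B h N))" by simp
  have fvd: "fv_qf (QNeg (diag sig B h N)) \<subseteq> {0..<n + m}" using fv_diag[of N sig B h] nm N_def by simp
  obtain w' where w'0: "\<forall>x. x \<notin> set [n..<n + m] \<longrightarrow> w' x = wA as x" "\<not> sat_qf A w' (QNeg (diag sig B h N))"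
    using key[OF fvd w0a ns] by blast
  have w': "\<forall>x. x \<notin> set [n..<n + m] \<longrightarrow> w' x = wA as x" "sat_qf A w' (diag sig B h N)"
    using w'0 by auto
  have D1: "\<forall>r xs. set xs \<subseteq> {0..<N} \<longrightarrow> (A r (map w' xs) \<longleftrightarrow> B r (map h xs))"
    and D2: "\<forall>a<N. \<forall>b<N. w' a = w' b \<longleftrightarrow> h a = h b"
    using w'(2) unfolding sat_diag[OF wfB wfA] by auto
  define \<beta>0 where "\<beta>0 = map w' [0..<N]"
  define \<beta> where "\<beta> = \<beta>0 @ (if k \<in> set \<beta>0 then [] else [k])"
  have lb: "N \<le> length \<beta>" unfolding \<beta>_def \<beta>0_def by simp
  have bi: "\<beta> ! i = w' i" if "i < N" for i
    unfolding \<beta>_def \<beta>0_def using that by (simp add: nth_append)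
  have injw: "inj_on w' {0..<N}"
    using D2 h(1) unfolding bij_def inj_def inj_on_def by auto
  have d0: "distinct \<beta>0" unfolding \<beta>0_def using injw by (simp add: distinct_map)
  have "distinct \<beta>" unfolding \<beta>_def using d0 by auto
  moreover have "k \<in> set \<beta>" unfolding \<beta>_def by auto
  moreover have "take n \<beta> = as"
  proof -
    have "take n \<beta> = take n \<beta>0" unfolding \<beta>_def \<beta>0_def using nm by auto
    also have "\<dots> = map w' [0..<n]" unfolding \<beta>0_def using nm by (simp add: take_map)
    also have "\<dots> = map (\<lambda>x. as ! x) [0..<n]" using w'(1) unfolding wA_def by (auto simp: n_def)
    also have "\<dots> = as" unfolding n_def by (rule map_nth)
    finally show ?thesis .
  qed
  moreover have "\<forall>g. (\<forall>i<length \<beta>. g i = \<beta> ! i) \<longrightarrow> M (restr (\<lambda>r xs. A r (map g xs)) t) = Some B"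
  proof (intro allI impI)
    fix g assume g: "\<forall>i<length \<beta>. g i = \<beta> ! i"
    have "restr (\<lambda>r xs. A r (map g xs)) t = restr C t"
      unfolding restr_def
    proof (simp, intro ext)
      fix r xs
      show "(A r (map g xs) \<and> set xs \<subseteq> {0..t}) = (C r xs \<and> set xs \<subseteq> {0..t})"
      proof (cases "set xs \<subseteq> {0..t}")
        case True
        then have "map g xs = map w' xs" using g bi lb unfolding N_def by (auto simp: map_eq_conv)
        moreover have "set xs \<subseteq> {0..<N}" using True unfolding N_def by auto
        ultimately show ?thesis using D1 True unfolding C_def by (simp del: map_eq_conv)
      qed simp
    qed
    then show "M (restr (\<lambda>r xs. A r (map g xs)) t) = Some B" using t by simp
  qed
  ultimately have "Pstep as k M A B \<beta>" unfolding Pstep_def n_def using t lb N_def n_def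
    by (intro conjI exI[of _ t]) auto
  then show ?thesis by blast
qed

lemma no_sep:
  assumes fam: "family sig K" and PL: "PL_learnable sig K" and AB: "A \<in> K" "B \<in> K" "A \<noteq> B"
  shows "\<exists>\<phi>. sentence \<phi> \<and> SigmaInf 2 \<phi> \<and> models A \<phi> \<and> \<not> models B \<phi>"
proof (rule ccontr)
  assume "\<not> ?thesis"
  then have H: "\<forall>\<phi>. sentence \<phi> \<and> SigmaInf 2 \<phi> \<and> models A \<phi> \<longrightarrow> models B \<phi>" by blast
  obtain M where M1: "\<forall>S\<in>LD sig K. \<forall>A\<in>K. infinite {n. M (restr S n) = Some A} \<longleftrightarrow> iso A S"
    using PL unfolding PL_learnable_def by blast
  have wfA: "wf_str sig A" and wfB: "wf_str sig B" using fam AB unfolding family_def by auto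
  have learnB: "\<forall>C. wf_str sig C \<and> iso B C \<longrightarrow> infinite {t. M (restr C t) = Some B}"
  proof (intro allI impI)
    fix C assume C: "wf_str sig C \<and> iso B C"
    then have "C \<in> LD sig K" unfolding LD_def using AB by blast
    then show "infinite {t. M (restr C t) = Some B}" using M1 AB C by blast
  qed
  have stp: "\<exists>\<beta>. Pstep as k M A B \<beta>" if "distinct as" for as k
    using step[OF wfA wfB learnB _ that] H ptype_sentence ptype_sigma2 ptype_models by blast
  define sq where "sq = rec_nat [] (\<lambda>k \<alpha>. SOME \<beta>. Pstep \<alpha> k M A B \<beta>)"
  have sq0: "sq 0 = []" and sqS: "sq (Suc k) = (SOME \<beta>. Pstep (sq k) k M A B \<beta>)" for k
    unfolding sq_def by simp_all
  have d: "distinct (sq k)" for k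
  proof (induction k)
    case 0 then show ?case by (simp add: sq0)
  next
    case (Suc k)
    have "Pstep (sq k) k M A B (sq (Suc k))" unfolding sqS using stp[OF Suc] by (rule someI_ex)
    then show ?case unfolding Pstep_def by blast
  qed
  have P: "Pstep (sq k) k M A B (sq (Suc k))" for k unfolding sqS using stp[OF d] by (rule someI_ex)
  have lenS: "length (sq k) < length (sq (Suc k))" for k using P[of k] unfolding Pstep_def by auto
  have lenk: "k \<le> length (sq k)" for k
    by (induction k) (auto simp: sq0 intro: Suc_leI le_less_trans[OF _ lenS])
  have lmono: "length (sq k) \<le> length (sq k')" if "k \<le> k'" for k k'
    using that by (induction k' rule: dec_induct) (auto intro: le_trans less_imp_le[OF lenS])
  have pref: "take (length (sq k)) (sq k') = sq k" if "k \<le> k'" for k k'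
    using that
  proof (induction k' rule: dec_induct)
    case base then show ?case by simp
  next
    case (step k')
    have "take (length (sq k)) (sq (Suc k')) = take (length (sq k)) (take (length (sq k')) (sq (Suc k')))"
      using lmono[OF step(1)] by (simp add: min_absorb1)
    also have "\<dots> = sq k" using P[of k'] step(3) unfolding Pstep_def by simp
    finally show ?case .
  qed
  have nthk: "sq k' ! i = sq k ! i" if "k \<le> k'" "i < length (sq k)" for k k' i
    using pref[OF that(1)] that(2) by (metis nth_take)
  define g where "g i = sq (Suc i) ! i" for i
  have gk: "g i = sq k ! i" if "i < length (sq k)" for i k
  proof -
    have "g i = sq (max k (Suc i)) ! i" unfolding g_def
      using nthk[of "Suc i" "max k (Suc i)" i] lenk[of "Suc i"] by simp
    also have "\<dots> = sq k ! i" using nthk[of k "max k (Suc i)" i] that by simp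
    finally show ?thesis .
  qed
  have "inj g"
  proof (rule injI)
    fix i j assume e: "g i = g j"
    let ?K = "Suc (max i j)"
    have "i < length (sq ?K)" "j < length (sq ?K)" using lenk[of ?K] by auto
    then show "i = j" using e gk d[of ?K] by (metis nth_eq_iff_index_eq)
  qed
  moreover have "surj g"
  proof (rule surjI)
    fix y
    have "y \<in> set (sq (Suc y))" using P[of y] unfolding Pstep_def by blast
    then obtain i where "i < length (sq (Suc y))" "sq (Suc y) ! i = y" by (auto simp: in_set_conv_nth)
    then show "g (inv g y) = y" using gk
      by (metis f_inv_into_f rangeI)
  qed
  ultimately have bg: "bij g" by (simp add: bij_def)
  define S where "S = (\<lambda>r xs. A r (map g xs))"
  have isoAS: "iso A S" unfolding S_def by (rule iso_sym[OF iso_pullback[OF bg]])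
  have wfS: "wf_str sig S" using wfA unfolding wf_str_def S_def by (metis length_map)
  have SLD: "S \<in> LD sig K" unfolding LD_def using AB isoAS wfS by blast
  have "infinite {n. M (restr S n) = Some B}"
    unfolding infinite_nat_iff_unbounded_le
  proof
    fix m
    obtain t where t: "length (sq m) \<le> t" "t < length (sq (Suc m))"
      "\<forall>g'. (\<forall>i<length (sq (Suc m)). g' i = sq (Suc m) ! i) \<longrightarrow> M (restr (\<lambda>r xs. A r (map g' xs)) t) = Some B"
      using P[of m] unfolding Pstep_def by blast
    have "M (restr S t) = Some B" unfolding S_def using t(3) gk by blast
    moreover have "m \<le> t" using lenk[of m] t(1) by simp
    ultimately show "\<exists>n\<ge>m. n \<in> {n. M (restr S n) = Some B}" by blast
  qed
  then have "iso B S" using M1 SLD AB by blast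
  then have "iso A B" using iso_trans[OF isoAS iso_sym] by blast
  then show False using fam AB unfolding family_def by blast
qed


theorem mainTheorem14:
  fixes sig :: "nat list" and K :: "str set"
  assumes "family sig K"
  shows "PL_learnable sig K \<longleftrightarrow> Sigma2_antichain K"
proof
  assume PL: "PL_learnable sig K"
  show "Sigma2_antichain K" unfolding Sigma2_antichain_def
  proof (intro ballI impI)
    fix A B assume AB: "A \<in> K" "B \<in> K" "A \<noteq> B"
    obtain \<phi> where "sentence \<phi> \<and> SigmaInf 2 \<phi> \<and> models A \<phi> \<and> \<not> models B \<phi>"
      using no_sep[OF assms PL AB] by blast
    moreover obtain \<psi> where "sentence \<psi> \<and> SigmaInf 2 \<psi> \<and> models B \<psi> \<and> \<not> models A \<psi>"
      using no_sep[OF assms PL AB(2,1)] AB(3) by metis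
    ultimately show "\<exists>\<phi> \<psi>. sentence \<phi> \<and> SigmaInf 2 \<phi> \<and> sentence \<psi> \<and> SigmaInf 2 \<psi> \<and>
        models A \<phi> \<and> \<not> models B \<phi> \<and> models B \<psi> \<and> \<not> models A \<psi>" by blast
  qed
next
  assume "Sigma2_antichain K"
  then show "PL_learnable sig K" using antichain_PL[OF assms] by blast
qed

end
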